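(* Let $X$ be a real Hilbert space, let $\alpha\in\mathbb{R}\setminus\{0\}$ and $\beta>0$, equip $X\times X\times\mathbb{R}$ with the norm $\|(x,y,\gamma)\|=\sqrt{\|x\|^2+\|y\|^2+\beta^2|\gamma|^2}$, and let $C_\alpha=\{(x,y,\gamma)\in X\times X\times\mathbb{R}:\langle x,y\rangle=\alpha\gamma\}$. Then: (i) $C_\alpha$ is closed; if $X$ is infinite-dimensional, then $C_\alpha$ is not weakly closed, and in fact its weak closure is $X\times X\times\mathbb{R}$. (ii) $C_\alpha$ is prox-regular in $X\times X\times\mathbb{R}$; hence, for every point of $C_\alpha$ there exists a neighborhood on which the projection mapping $P_{C_\alpha}$ is single-valued.
   Context: $P_S(z)=\operatorname{argmin}_{w\in S}\|w-z\|$. A closed set $S$ is prox-regular (in the sense of Poliquin–Rockafellar–Thibault) if at every point of $S$ it is prox-regular, i.e., there exist $\varepsilon,r>0$ such that for all $x\in S$ near the point and all proximal normals $v$ to $S$ at $x$ with $\|v\|<\varepsilon$, one has $\langle v,x'-x\rangle\leq \frac{r}{2}\|x'-x\|^2$ for all $x'\in S$ near the point. *)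

theory Defs
  imports "HOL-Analysis.Analysis"
begin

definition weak_top :: "('v::real_normed_vector) topology" where
  "weak_top = topology_generated_by
     {f -` U | (f :: 'v \<Rightarrow> real) U. bounded_linear f \<and> open U}"

definition ip_beta :: "real \<Rightarrow> ('a::real_inner \<times> 'a \<times> real) \<Rightarrow> ('a \<times> 'a \<times> real) \<Rightarrow> real" where
  "ip_beta \<beta> p q = (case p of (x, y, g) \<Rightarrow> case q of (x', y', g') \<Rightarrow>
       inner x x' + inner y y' + \<beta>\<^sup>2 * g * g')"

definition ipnorm :: "('v \<Rightarrow> 'v \<Rightarrow> real) \<Rightarrow> 'v \<Rightarrow> real" where
  "ipnorm ip z = sqrt (ip z z)"

definition proj :: "('v::real_vector \<Rightarrow> 'v \<Rightarrow> real) \<Rightarrow> 'v set \<Rightarrow> 'v \<Rightarrow> 'v set" where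
  "proj ip S z = {w \<in> S. \<forall>w' \<in> S. ipnorm ip (w - z) \<le> ipnorm ip (w' - z)}"

definition prox_normal :: "('v::real_vector \<Rightarrow> 'v \<Rightarrow> real) \<Rightarrow> 'v set \<Rightarrow> 'v \<Rightarrow> 'v \<Rightarrow> bool" where
  "prox_normal ip S x v \<longleftrightarrow> x \<in> S \<and> (\<exists>t>0. x \<in> proj ip S (x + t *\<^sub>R v))"

definition prox_regular_at :: "('v::real_vector \<Rightarrow> 'v \<Rightarrow> real) \<Rightarrow> 'v set \<Rightarrow> 'v \<Rightarrow> bool" where
  "prox_regular_at ip S a \<longleftrightarrow>
     (\<exists>\<epsilon>>0. \<exists>r>0. \<exists>\<delta>>0. \<forall>x \<in> S. ipnorm ip (x - a) < \<delta> \<longrightarrow>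
        (\<forall>v. prox_normal ip S x v \<and> ipnorm ip v < \<epsilon> \<longrightarrow>
          (\<forall>x' \<in> S. ipnorm ip (x' - a) < \<delta> \<longrightarrow>
             ip v (x' - x) \<le> r / 2 * (ipnorm ip (x' - x))\<^sup>2)))"

definition prox_regular :: "('v::real_normed_vector \<Rightarrow> 'v \<Rightarrow> real) \<Rightarrow> 'v set \<Rightarrow> bool" where
  "prox_regular ip S \<longleftrightarrow> closed S \<and> (\<forall>a \<in> S. prox_regular_at ip S a)"

definition C_set :: "real \<Rightarrow> ('a::real_inner \<times> 'a \<times> real) set" where
  "C_set \<alpha> = {(x, y, g). inner x y = \<alpha> * g}"

end

theory Submission
  imports Defs
begin

lemma C_mem[simp]: "((x,y,g) \<in> C_set \<alpha>) \<longleftrightarrow> inner x y = \<alpha> * g"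
  by (simp add: C_set_def)

lemma C_closed: "closed (C_set \<alpha> :: ('a::real_inner \<times> 'a \<times> real) set)"
proof -
  have "C_set \<alpha> = {p :: ('a \<times> 'a \<times> real). inner (fst p) (fst (snd p)) = \<alpha> * snd (snd p)}"
    by (auto simp: C_set_def)
  also have "closed \<dots>"
    by (intro closed_Collect_eq continuous_intros)
  finally show ?thesis .
qed

lemma codim:
  fixes G :: "('a::real_vector \<Rightarrow> real) set"
  assumes "finite G" "\<forall>g\<in>G. linear g"
  shows "\<exists>B. finite B \<and> (\<forall>v. \<exists>b\<in>span B. \<exists>k. (\<forall>g\<in>G. g k = 0) \<and> v = b + k)"
  using assms
proof (induction G rule: finite_induct)
  case empty
  show ?case by (rule exI[of _ "{}"]) (auto intro: exI[of _ 0])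
next
  case (insert g G)
  then obtain B where B: "finite B" "\<forall>v. \<exists>b\<in>span B. \<exists>k. (\<forall>g\<in>G. g k = 0) \<and> v = b + k"
    by auto
  have lg: "linear g" using insert by auto
  show ?case
  proof (cases "\<exists>e. (\<forall>h\<in>G. h e = 0) \<and> g e = 1")
    case True
    then obtain e where e: "\<forall>h\<in>G. h e = 0" "g e = 1" by auto
    show ?thesis
    proof (rule exI[of _ "insert e B"], intro conjI allI)
      show "finite (insert e B)" using B by simp
      fix v
      obtain b k where bk: "b \<in> span B" "\<forall>h\<in>G. h k = 0" "v = b + k" using B by blast
      have "b + g k *\<^sub>R e \<in> span (insert e B)"
        by (meson bk(1) span_add span_base span_mono span_scale insertI1 subset_insertI subsetD)
      moreover have "\<forall>h\<in>insert g G. h (k - g k *\<^sub>R e) = 0"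
      proof
        fix h assume "h \<in> insert g G"
        then have lh: "linear h" using insert by auto
        show "h (k - g k *\<^sub>R e) = 0"
        proof (cases "h = g")
          case True then show ?thesis using lg e by (simp add: linear_diff linear_scale)
        next
          case False then have "h \<in> G" using \<open>h \<in> insert g G\<close> by auto
          then have "h k = 0" "h e = 0" using bk e by auto
          then show ?thesis using lh by (simp add: linear_diff linear_scale)
        qed
      qed
      moreover have "v = (b + g k *\<^sub>R e) + (k - g k *\<^sub>R e)" using bk by simp
      ultimately show "\<exists>b\<in>span (insert e B). \<exists>k. (\<forall>g\<in>insert g G. g k = 0) \<and> v = b + k" by blast
    qed
  next
    case False
    have "\<forall>k. (\<forall>h\<in>G. h k = 0) \<longrightarrow> g k = 0"
    proof (intro allI impI, rule ccontr)
      fix k assume k: "\<forall>h\<in>G. h k = 0" "g k \<noteq> 0"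
      have "\<forall>h\<in>G. h ((1 / g k) *\<^sub>R k) = 0" using k insert by (simp add: linear_scale)
      moreover have "g ((1 / g k) *\<^sub>R k) = 1" using k lg by (simp add: linear_scale)
      ultimately show False using False by blast
    qed
    then show ?thesis using B by (metis insert_iff)
  qed
qed

lemma kernel_nonzero:
  fixes G :: "('a::real_vector \<Rightarrow> real) set"
  assumes "finite G" "\<forall>g\<in>G. linear g" "\<nexists>B :: 'a set. finite B \<and> span B = UNIV"
  shows "\<exists>k. k \<noteq> 0 \<and> (\<forall>g\<in>G. g k = 0)"
proof (rule ccontr)
  assume nk: "\<not> ?thesis"
  obtain B where B: "finite B" "\<forall>v. \<exists>b\<in>span B. \<exists>k. (\<forall>g\<in>G. g k = 0) \<and> v = b + k"
    using codim[OF assms(1,2)] by blast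
  have "span B = UNIV"
  proof -
    { fix v :: 'a
      obtain b k where "b \<in> span B" "\<forall>g\<in>G. g k = 0" "v = b + k" using B by blast
      moreover then have "k = 0" using nk by blast
      ultimately have "v \<in> span B" by simp }
    then show ?thesis by auto
  qed
  then show False using assms(3) B by blast
qed

definition Sw :: "(('a::real_normed_vector) set) set" where
  "Sw = {f -` U | (f :: 'a \<Rightarrow> real) U. bounded_linear f \<and> open U}"

lemma weak_top_Sw: "weak_top = topology_generated_by Sw"
  unfolding weak_top_def Sw_def by (rule refl)

lemma weak_nbhd:
  assumes "generate_topology_on (Sw :: ('v::real_normed_vector) set set) W" "p \<in> W"
  shows "\<exists>F. finite F \<and> (\<forall>f\<in>F. linear f) \<and> (\<forall>d. (\<forall>f\<in>F. f d = (0::real)) \<longrightarrow> p + d \<in> W)"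
  using assms
proof (induction arbitrary: p rule: generate_topology_on.induct)
  case Empty then show ?case by simp
next
  case (Int a b p)
  from Int.prems have pa: "p \<in> a" and pb: "p \<in> b" by auto
  obtain F1 where F1: "finite F1" "\<forall>f\<in>F1. linear f" "\<forall>d. (\<forall>f\<in>F1. f d = (0::real)) \<longrightarrow> p + d \<in> a"
    using Int.IH(1)[OF pa] by auto
  obtain F2 where F2: "finite F2" "\<forall>f\<in>F2. linear f" "\<forall>d. (\<forall>f\<in>F2. f d = (0::real)) \<longrightarrow> p + d \<in> b"
    using Int.IH(2)[OF pb] by auto
  show ?case
  proof (rule exI[of _ "F1 \<union> F2"], intro conjI allI impI)
    show "finite (F1 \<union> F2)" using F1 F2 by simp
    show "\<forall>f\<in>F1 \<union> F2. linear f" using F1(2) F2(2) by blast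
    fix d assume "\<forall>f\<in>F1 \<union> F2. f d = 0"
    then have "\<forall>f\<in>F1. f d = 0" "\<forall>f\<in>F2. f d = 0" by simp_all
    then show "p + d \<in> a \<inter> b" using F1(3) F2(3) by simp
  qed
next
  case (UN K p)
  from UN.prems obtain k where k: "k \<in> K" "p \<in> k" by (rule UnionE)
  obtain F where F: "finite F" "\<forall>f\<in>F. linear f" "\<forall>d. (\<forall>f\<in>F. f d = (0::real)) \<longrightarrow> p + d \<in> k"
    using UN.IH[OF k(1) k(2)] by auto
  show ?case
  proof (rule exI[of _ F], intro conjI allI impI)
    show "finite F" "\<forall>f\<in>F. linear f" using F by simp_all
    fix d assume "\<forall>f\<in>F. f d = 0"
    then have "p + d \<in> k" using F(3) by simp
    then show "p + d \<in> \<Union>K" using k(1) by (rule UnionI[rotated])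
  qed
next
  case (Basis s p)
  have "\<exists>(f :: 'v \<Rightarrow> real) U. s = f -` U \<and> bounded_linear f \<and> open U" using Basis.hyps by (simp add: Sw_def)
  then obtain f :: "'v \<Rightarrow> real" and U where fU: "s = f -` U" "bounded_linear f" "open U" by blast
  have lf: "linear f" using fU(2) by (rule bounded_linear.linear)
  have fp: "f p \<in> U" using Basis.prems fU(1) by simp
  show ?case
  proof (rule exI[of _ "{f}"], intro conjI allI impI)
    show "finite {f}" by simp
    show "\<forall>g\<in>{f}. linear g" using lf by blast
    fix d assume d: "\<forall>g\<in>{f}. g d = 0"
    have fd: "f d = 0" using d by blast
    have "f (p + d) = f p + f d" by (rule linear_add[OF lf])
    then have "f (p + d) \<in> U" using fd fp by simp
    then show "p + d \<in> s" using fU(1) by simp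
  qed
qed


lemma weak_closure_univ:
  assumes "\<alpha> \<noteq> 0" and inf: "\<nexists>B :: 'a::real_inner set. finite B \<and> span B = UNIV"
  shows "weak_top closure_of (C_set \<alpha> :: ('a \<times> 'a \<times> real) set) = UNIV"
proof -
  have tsp: "topspace (weak_top :: ('a \<times> 'a \<times> real) topology) = UNIV"
  proof -
    have "(\<lambda>_::('a \<times> 'a \<times> real). 0::real) -` UNIV \<in> Sw"
      unfolding Sw_def by (intro CollectI exI[of _ "\<lambda>_::('a \<times> 'a \<times> real). 0::real"] exI[of _ UNIV])
        (simp add: bounded_linear_zero)
    then show ?thesis by (auto simp: weak_top_Sw)
  qed
  have "\<exists>y\<in>C_set \<alpha>. y \<in> T" if T: "openin weak_top T" "p \<in> T" for T and p :: "'a \<times> 'a \<times> real"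
  proof -
    obtain x y g where p: "p = (x, y, g)" by (cases p)
    have gT: "generate_topology_on Sw T" using T(1) unfolding weak_top_Sw by (rule openin_topology_generated_by)
    obtain F where F: "finite F" "\<forall>f\<in>F. linear f" "\<forall>d. (\<forall>f\<in>F. f d = (0::real)) \<longrightarrow> p + d \<in> T"
      using weak_nbhd[OF gT T(2)] by blast
    define G where "G = (\<lambda>f u. f (u, 0::'a, 0::real)) ` F \<union> (\<lambda>f u. f (0::'a, u, 0::real)) ` F"
    have "finite G" using F by (simp add: G_def)
    moreover have "\<forall>g\<in>G. linear g"
    proof
      have l1: "linear (\<lambda>u::'a. (u, 0::'a, 0::real))" by (auto simp: linear_iff)
      have l2: "linear (\<lambda>u::'a. (0::'a, u, 0::real))" by (auto simp: linear_iff)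
      fix g assume "g \<in> G"
      then obtain f where f: "f \<in> F" and gf: "g = (\<lambda>u. f (u, 0, 0)) \<or> g = (\<lambda>u. f (0, u, 0))"
        unfolding G_def by blast
      have lf: "linear f" using F(2) f by blast
      show "linear g" using gf linear_compose[OF l1 lf] linear_compose[OF l2 lf] by (auto simp: o_def)
    qed
    ultimately obtain v where v: "v \<noteq> 0" "\<forall>g\<in>G. g v = 0" using kernel_nonzero inf by blast
    define N where "N = inner v v"
    have N: "N > 0" using v by (simp add: N_def)
    define a where "a = (1 - inner x v) / N"
    define b where "b = \<alpha> * g - inner x y - a * inner v y"
    define d where "d = (a *\<^sub>R v, b *\<^sub>R v, 0::real)"
    have "\<forall>f\<in>F. f d = 0"
    proof
      fix f assume f: "f \<in> F"
      then have lf: "linear f" using F by auto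
      have deq: "d = a *\<^sub>R (v, 0, 0) + b *\<^sub>R (0, v, 0)" by (simp add: d_def)
      have "f (a *\<^sub>R (v, 0, 0) + b *\<^sub>R (0, v, 0)) = a * f (v, 0, 0) + b * f (0, v, 0)"
        by (simp only: linear_add[OF lf] linear_scale[OF lf] real_scaleR_def)
      then have "f d = a * f (v, 0, 0) + b * f (0, v, 0)" by (simp only: deq)
      moreover have "f (v, 0, 0) = 0"
      proof -
        have "(\<lambda>u. f (u, 0::'a, 0::real)) \<in> G" unfolding G_def using f by (intro UnI1 imageI)
        from bspec[OF v(2) this] show ?thesis by simp
      qed
      moreover have "f (0, v, 0) = 0"
      proof -
        have "(\<lambda>u. f (0::'a, u, 0::real)) \<in> G" unfolding G_def using f by (intro UnI2 imageI)
        from bspec[OF v(2) this] show ?thesis by simp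
      qed
      ultimately show "f d = 0" by simp
    qed
    then have "p + d \<in> T" using F by blast
    moreover have "p + d \<in> C_set \<alpha>"
    proof -
      have "inner (x + a *\<^sub>R v) (y + b *\<^sub>R v) = inner x y + a * inner v y + b * (inner x v + a * N)"
        by (simp add: inner_add_left inner_add_right N_def algebra_simps inner_commute)
      also have "inner x v + a * N = 1" using N by (simp add: a_def)
      finally have "inner (x + a *\<^sub>R v) (y + b *\<^sub>R v) = \<alpha> * (g + 0)" by (simp add: b_def)
      then show ?thesis by (simp add: p d_def)
    qed
    ultimately show ?thesis by blast
  qed
  then show ?thesis by (auto simp: closure_of_def tsp)
qed

lemma not_weak_closed:
  assumes "\<alpha> \<noteq> 0" and inf: "\<nexists>B :: 'a::real_inner set. finite B \<and> span B = UNIV"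
  shows "\<not> closedin weak_top (C_set \<alpha> :: ('a \<times> 'a \<times> real) set)"
proof
  assume "closedin weak_top (C_set \<alpha> :: ('a \<times> 'a \<times> real) set)"
  then have "C_set \<alpha> = (UNIV :: ('a \<times> 'a \<times> real) set)"
    using closure_of_closedin weak_closure_univ[OF assms] by metis
  moreover have "(0::'a, 0::'a, 1::real) \<notin> C_set \<alpha>" using assms by simp
  ultimately show False by blast
qed


lemma real_aux:
  fixes t A K :: real
  assumes h: "\<forall>h. 2*h*t*A \<le> h\<^sup>2*K" and t: "t > 0" and K: "K \<ge> 0"
  shows "A = 0"
proof -
  define h where "h = t*A/(K+1)"
  have hK: "h*(K+1) = t*A" using K by (simp add: h_def)
  have "2*h*(t*A) \<le> h*h*K" using h[rule_format, of h] by (simp add: power2_eq_square mult.assoc)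
  moreover have "2*h*(t*A) = 2*(h*h)*(K+1)" unfolding hK[symmetric] by (simp add: algebra_simps)
  ultimately have "2*(h*h)*(K+1) \<le> (h*h)*K" by simp
  then have "(h*h)*(K+2) \<le> 0" by (simp add: algebra_simps)
  moreover have "h*h \<ge> 0" by simp
  ultimately have "h*h = 0" using K by (smt (verit) mult_pos_pos)
  then have "t*A = 0" using hK by simp
  then show ?thesis using t by simp
qed

lemma ip_sq: "ip_beta \<beta> (x, y, g) (x, y, g) = inner x x + inner y y + \<beta>\<^sup>2 * g\<^sup>2"
  by (simp add: ip_beta_def power2_eq_square)

lemma pn_ineq:
  assumes "t > 0"
    and min: "\<forall>w\<in>C_set \<alpha>. ipnorm (ip_beta \<beta>) ((x0,y0,g0) - ((x0,y0,g0) + t *\<^sub>R (p,q,s)))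
               \<le> ipnorm (ip_beta \<beta>) (w - ((x0,y0,g0) + t *\<^sub>R (p,q,s)))"
    and "inner x1 y1 = \<alpha> * g1"
  shows "t\<^sup>2 * (inner p p + inner q q + \<beta>\<^sup>2 * s\<^sup>2) \<le>
     inner (x1 - x0 - t*\<^sub>R p) (x1 - x0 - t*\<^sub>R p) + inner (y1 - y0 - t*\<^sub>R q) (y1 - y0 - t*\<^sub>R q)
     + \<beta>\<^sup>2 * (g1 - g0 - t * s)\<^sup>2"
proof -
  have e1: "(x1,y1,g1) - ((x0,y0,g0) + t *\<^sub>R (p,q,s)) = (x1 - x0 - t*\<^sub>R p, y1 - y0 - t*\<^sub>R q, g1 - g0 - t * s)"
    by (simp add: diff_diff_eq)
  have e2: "(x0,y0,g0) - ((x0,y0,g0) + t *\<^sub>R (p,q,s)) = (-(t*\<^sub>R p), -(t*\<^sub>R q), -(t * s))"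
    by simp
  have "ipnorm (ip_beta \<beta>) ((x0,y0,g0) - ((x0,y0,g0) + t *\<^sub>R (p,q,s)))
               \<le> ipnorm (ip_beta \<beta>) ((x1,y1,g1) - ((x0,y0,g0) + t *\<^sub>R (p,q,s)))"
    by (rule min[rule_format]) (simp add: assms(3))
  then have "ip_beta \<beta> (-(t*\<^sub>R p), -(t*\<^sub>R q), -(t * s)) (-(t*\<^sub>R p), -(t*\<^sub>R q), -(t * s))
     \<le> ip_beta \<beta> (x1 - x0 - t*\<^sub>R p, y1 - y0 - t*\<^sub>R q, g1 - g0 - t * s) (x1 - x0 - t*\<^sub>R p, y1 - y0 - t*\<^sub>R q, g1 - g0 - t * s)"
    unfolding e1 e2 ipnorm_def real_sqrt_le_iff .
  then show ?thesis unfolding ip_sq by (simp add: power2_eq_square distrib_left mult_ac)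
qed

lemma pn:
  fixes x0 y0 p q :: "'a::real_inner"
  assumes a: "\<alpha> \<noteq> 0" and t: "t > 0" and x0C: "inner x0 y0 = \<alpha> * g0"
    and min: "\<forall>w\<in>C_set \<alpha>. ipnorm (ip_beta \<beta>) ((x0,y0,g0) - ((x0,y0,g0) + t *\<^sub>R (p,q,s)))
               \<le> ipnorm (ip_beta \<beta>) (w - ((x0,y0,g0) + t *\<^sub>R (p,q,s)))"
  shows "p = - (\<beta>\<^sup>2 * s / \<alpha>) *\<^sub>R y0 \<and> q = - (\<beta>\<^sup>2 * s / \<alpha>) *\<^sub>R x0"
proof -
  define c where "c = \<beta>\<^sup>2 * s / \<alpha>"
  define u where "u = p + c *\<^sub>R y0"
  define U where "U = inner u u"
  define P where "P = inner u p"
  define Y where "Y = inner u y0"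
  have e4: "U = P + c * Y" by (simp add: U_def P_def Y_def u_def inner_add_right)
  have cY: "\<beta>\<^sup>2 * s * (Y / \<alpha>) = c * Y" by (simp add: c_def)
  have "\<forall>h. 2*h*t*U \<le> h\<^sup>2 * (inner u u + \<beta>\<^sup>2 * (Y / \<alpha>)\<^sup>2)"
  proof
    fix h :: real
    have mem: "inner (x0 + h *\<^sub>R u) y0 = \<alpha> * (g0 + h * Y / \<alpha>)"
      using a x0C by (simp add: inner_add_left Y_def field_simps)
    from pn_ineq[OF t min mem]
    have i: "t\<^sup>2 * (inner p p + inner q q + \<beta>\<^sup>2 * s\<^sup>2) \<le>
     inner (x0 + h *\<^sub>R u - x0 - t*\<^sub>R p) (x0 + h *\<^sub>R u - x0 - t*\<^sub>R p) + inner (y0 - y0 - t*\<^sub>R q) (y0 - y0 - t*\<^sub>R q)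
     + \<beta>\<^sup>2 * (g0 + h * Y / \<alpha> - g0 - t * s)\<^sup>2" .
    have e1: "inner (x0 + h *\<^sub>R u - x0 - t*\<^sub>R p) (x0 + h *\<^sub>R u - x0 - t*\<^sub>R p) = h\<^sup>2 * U - 2*h*t*P + t\<^sup>2 * inner p p"
      by (simp add: U_def P_def inner_diff_left inner_diff_right inner_commute power2_eq_square algebra_simps)
    have e2: "inner (y0 - y0 - t*\<^sub>R q) (y0 - y0 - t*\<^sub>R q) = t\<^sup>2 * inner q q"
      by (simp add: power2_eq_square)
    have e3: "\<beta>\<^sup>2 * (g0 + h * Y / \<alpha> - g0 - t * s)\<^sup>2 = h\<^sup>2 * (\<beta>\<^sup>2 * (Y / \<alpha>)\<^sup>2) - 2*h*t*(\<beta>\<^sup>2 * s * (Y / \<alpha>)) + t\<^sup>2 * (\<beta>\<^sup>2 * s\<^sup>2)"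
      by (simp add: power2_eq_square algebra_simps)
    have "0 \<le> h\<^sup>2 * U + h\<^sup>2 * (\<beta>\<^sup>2 * (Y / \<alpha>)\<^sup>2) - 2*h*t*(P + c * Y)"
      using i unfolding e1 e2 e3 cY by (simp add: algebra_simps)
    then show "2*h*t*U \<le> h\<^sup>2 * (inner u u + \<beta>\<^sup>2 * (Y / \<alpha>)\<^sup>2)"
      unfolding e4[symmetric] U_def[symmetric] by (simp add: algebra_simps)
  qed
  then have "U = 0" using real_aux[OF _ t] by (metis (no_types, lifting) U_def inner_ge_zero add_nonneg_nonneg zero_le_power2 mult_nonneg_nonneg)
  then have p: "p = - c *\<^sub>R y0" by (simp add: U_def u_def eq_neg_iff_add_eq_0)
  define u' where "u' = q + c *\<^sub>R x0"
  define U' where "U' = inner u' u'"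
  define Q where "Q = inner u' q"
  define X where "X = inner x0 u'"
  have e4': "U' = Q + c * X" by (simp add: U'_def Q_def X_def u'_def inner_add_right inner_commute distrib_left)
  have cX: "\<beta>\<^sup>2 * s * (X / \<alpha>) = c * X" by (simp add: c_def)
  have "\<forall>h. 2*h*t*U' \<le> h\<^sup>2 * (inner u' u' + \<beta>\<^sup>2 * (X / \<alpha>)\<^sup>2)"
  proof
    fix h :: real
    have mem: "inner x0 (y0 + h *\<^sub>R u') = \<alpha> * (g0 + h * X / \<alpha>)"
      using a x0C by (simp add: inner_add_right X_def field_simps)
    from pn_ineq[OF t min mem]
    have i: "t\<^sup>2 * (inner p p + inner q q + \<beta>\<^sup>2 * s\<^sup>2) \<le>
     inner (x0 - x0 - t*\<^sub>R p) (x0 - x0 - t*\<^sub>R p) + inner (y0 + h *\<^sub>R u' - y0 - t*\<^sub>R q) (y0 + h *\<^sub>R u' - y0 - t*\<^sub>R q)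
     + \<beta>\<^sup>2 * (g0 + h * X / \<alpha> - g0 - t * s)\<^sup>2" .
    have e1: "inner (y0 + h *\<^sub>R u' - y0 - t*\<^sub>R q) (y0 + h *\<^sub>R u' - y0 - t*\<^sub>R q) = h\<^sup>2 * U' - 2*h*t*Q + t\<^sup>2 * inner q q"
      by (simp add: U'_def Q_def inner_diff_left inner_diff_right inner_commute power2_eq_square algebra_simps)
    have e2: "inner (x0 - x0 - t*\<^sub>R p) (x0 - x0 - t*\<^sub>R p) = t\<^sup>2 * inner p p"
      by (simp add: power2_eq_square)
    have e3: "\<beta>\<^sup>2 * (g0 + h * X / \<alpha> - g0 - t * s)\<^sup>2 = h\<^sup>2 * (\<beta>\<^sup>2 * (X / \<alpha>)\<^sup>2) - 2*h*t*(\<beta>\<^sup>2 * s * (X / \<alpha>)) + t\<^sup>2 * (\<beta>\<^sup>2 * s\<^sup>2)"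
      by (simp add: power2_eq_square algebra_simps)
    have "0 \<le> h\<^sup>2 * U' + h\<^sup>2 * (\<beta>\<^sup>2 * (X / \<alpha>)\<^sup>2) - 2*h*t*(Q + c * X)"
      using i unfolding e1 e2 e3 cX by (simp add: algebra_simps)
    then show "2*h*t*U' \<le> h\<^sup>2 * (inner u' u' + \<beta>\<^sup>2 * (X / \<alpha>)\<^sup>2)"
      unfolding e4'[symmetric] U'_def[symmetric] by (simp add: algebra_simps)
  qed
  then have "U' = 0" using real_aux[OF _ t] by (metis (no_types, lifting) U'_def inner_ge_zero add_nonneg_nonneg zero_le_power2 mult_nonneg_nonneg)
  then have q: "q = - c *\<^sub>R x0" by (simp add: U'_def u'_def eq_neg_iff_add_eq_0)
  show ?thesis using p q by (simp add: c_def)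
qed

lemma two_inner_le: "2 * \<bar>inner (a::'a::real_inner) b\<bar> \<le> inner a a + inner b b"
proof -
  have "0 \<le> inner (a - b) (a - b)" "0 \<le> inner (a + b) (a + b)" by simp_all
  then show ?thesis by (simp add: inner_diff_left inner_diff_right inner_add_left inner_add_right inner_commute abs_le_iff)
qed

lemma prox_ineq:
  fixes x0 y0 x1 y1 :: "'a::real_inner"
  assumes a: "\<alpha> \<noteq> 0" and b: "\<beta> > 0" and C0: "inner x0 y0 = \<alpha> * g0" and C1: "inner x1 y1 = \<alpha> * g1"
    and v: "ip_beta \<beta> (p, q, s) (p, q, s) < 1"
    and pq: "p = - (\<beta>\<^sup>2 * s / \<alpha>) *\<^sub>R y0 \<and> q = - (\<beta>\<^sup>2 * s / \<alpha>) *\<^sub>R x0"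
  shows "ip_beta \<beta> (p, q, s) ((x1, y1, g1) - (x0, y0, g0))
     \<le> (\<beta> / \<bar>\<alpha>\<bar>) / 2 * (ipnorm (ip_beta \<beta>) ((x1, y1, g1) - (x0, y0, g0)))\<^sup>2"
proof -
  define c where "c = \<beta>\<^sup>2 * s / \<alpha>"
  define dx where "dx = x1 - x0"
  define dy where "dy = y1 - y0"
  have p: "p = - c *\<^sub>R y0" and q: "q = - c *\<^sub>R x0" using pq by (simp_all add: c_def)
  have g: "\<beta>\<^sup>2 * s * (g1 - g0) = c * (inner x1 y1 - inner x0 y0)"
    using a C0 C1 by (simp add: c_def field_simps)
  have ipv: "ip_beta \<beta> (p, q, s) ((x1, y1, g1) - (x0, y0, g0)) = c * inner dx dy"
  proof -
    have "ip_beta \<beta> (p, q, s) ((x1, y1, g1) - (x0, y0, g0)) = inner p dx + inner q dy + \<beta>\<^sup>2 * s * (g1 - g0)"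
      by (simp add: ip_beta_def dx_def dy_def power2_eq_square)
    also have "\<dots> = c * inner dx dy"
      unfolding g p q dx_def dy_def
      by (simp add: inner_diff_left inner_diff_right inner_commute algebra_simps)
    finally show ?thesis .
  qed
  have nn: "ip_beta \<beta> (dx, dy, g1 - g0) (dx, dy, g1 - g0) \<ge> 0"
    by (simp add: ip_sq)
  have nrm: "(ipnorm (ip_beta \<beta>) ((x1, y1, g1) - (x0, y0, g0)))\<^sup>2 = inner dx dx + inner dy dy + \<beta>\<^sup>2 * (g1 - g0)\<^sup>2"
    using nn by (simp add: ipnorm_def dx_def dy_def ip_sq)
  have "(\<beta> * s)\<^sup>2 \<le> 1\<^sup>2"
    using v by (simp add: ip_sq power_mult_distrib) (smt (verit) inner_ge_zero)
  then have bs: "\<bar>\<beta> * s\<bar> \<le> 1" using abs_le_square_iff[of "\<beta> * s" 1] by simp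
  have "\<bar>c\<bar> = \<beta> * \<bar>\<beta> * s\<bar> / \<bar>\<alpha>\<bar>" using b by (simp add: c_def abs_mult power2_eq_square)
  also have "\<dots> \<le> \<beta> / \<bar>\<alpha>\<bar>" using b bs a by (simp add: divide_right_mono)
  finally have cb: "\<bar>c\<bar> \<le> \<beta> / \<bar>\<alpha>\<bar>" .
  have "c * inner dx dy \<le> \<bar>c\<bar> * \<bar>inner dx dy\<bar>" by (simp add: abs_mult[symmetric])
  also have "\<dots> \<le> (\<beta> / \<bar>\<alpha>\<bar>) * ((inner dx dx + inner dy dy) / 2)"
    using cb two_inner_le[of dx dy] b by (intro mult_mono) auto
  also have "\<dots> \<le> (\<beta> / \<bar>\<alpha>\<bar>) / 2 * (inner dx dx + inner dy dy + \<beta>\<^sup>2 * (g1 - g0)\<^sup>2)"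
    using b a by (simp add: field_simps)
  finally show ?thesis unfolding ipv nrm .
qed

lemma prox_reg:
  assumes a: "\<alpha> \<noteq> 0" and b: "\<beta> > 0"
  shows "prox_regular (ip_beta \<beta>) (C_set \<alpha> :: ('a::real_inner \<times> 'a \<times> real) set)"
proof -
  have "prox_regular_at (ip_beta \<beta>) (C_set \<alpha>) aa" if "aa \<in> C_set \<alpha>" for aa :: "'a \<times> 'a \<times> real"
    unfolding prox_regular_at_def
  proof (rule exI[of _ 1], intro conjI, simp, rule exI[of _ "\<beta> / \<bar>\<alpha>\<bar>"], intro conjI,
      use a b in simp, rule exI[of _ 1], intro conjI, simp, intro ballI impI allI)
    fix x v x' :: "'a \<times> 'a \<times> real"
    assume xC: "x \<in> C_set \<alpha>" and pnv: "prox_normal (ip_beta \<beta>) (C_set \<alpha>) x v \<and> ipnorm (ip_beta \<beta>) v < 1"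
      and x'C: "x' \<in> C_set \<alpha>"
    obtain x0 y0 g0 where x: "x = (x0, y0, g0)" by (cases x)
    obtain p q s where vv: "v = (p, q, s)" by (cases v)
    obtain x1 y1 g1 where x': "x' = (x1, y1, g1)" by (cases x')
    obtain t where t: "t > 0" "x \<in> proj (ip_beta \<beta>) (C_set \<alpha>) (x + t *\<^sub>R v)"
      using pnv by (auto simp: prox_normal_def)
    have C0: "inner x0 y0 = \<alpha> * g0" using xC x by simp
    have C1: "inner x1 y1 = \<alpha> * g1" using x'C x' by simp
    have min: "\<forall>w\<in>C_set \<alpha>. ipnorm (ip_beta \<beta>) ((x0,y0,g0) - ((x0,y0,g0) + t *\<^sub>R (p,q,s)))
               \<le> ipnorm (ip_beta \<beta>) (w - ((x0,y0,g0) + t *\<^sub>R (p,q,s)))"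
      using t(2) by (simp add: proj_def x vv)
    have pq: "p = - (\<beta>\<^sup>2 * s / \<alpha>) *\<^sub>R y0 \<and> q = - (\<beta>\<^sup>2 * s / \<alpha>) *\<^sub>R x0"
      using pn[OF a t(1) C0 min] .
    have "ip_beta \<beta> (p, q, s) (p, q, s) < 1"
      using pnv vv by (simp add: ipnorm_def)
    from prox_ineq[OF a b C0 C1 this pq]
    show "ip_beta \<beta> v (x' - x) \<le> (\<beta> / \<bar>\<alpha>\<bar>) / 2 * (ipnorm (ip_beta \<beta>) (x' - x))\<^sup>2"
      by (simp add: x x' vv)
  qed
  then show ?thesis unfolding prox_regular_def using C_closed by blast
qed


lemma proj_unique:
  fixes xb yb :: "'a::real_inner"
  assumes a: "\<alpha> \<noteq> 0" and b: "\<beta> > 0" and near: "\<bar>inner xb yb - \<alpha> * gb\<bar> \<le> \<alpha>\<^sup>2 / (2 * \<beta>\<^sup>2)"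
  shows "\<exists>!w. w \<in> proj (ip_beta \<beta>) (C_set \<alpha>) (xb, yb, gb)"
proof -
  define k where "k = \<beta>\<^sup>2 / \<alpha>\<^sup>2"
  have k: "k > 0" using a b by (simp add: k_def)
  define c0 where "c0 = \<alpha> * gb"
  define X where "X = (\<lambda>\<mu>::real. (1 / (1 - \<mu>\<^sup>2)) *\<^sub>R (xb - \<mu> *\<^sub>R yb))"
  define Y where "Y = (\<lambda>\<mu>::real. (1 / (1 - \<mu>\<^sup>2)) *\<^sub>R (yb - \<mu> *\<^sub>R xb))"
  define f where "f = (\<lambda>\<mu>. inner (X \<mu>) (Y \<mu>) - \<mu> / k - c0)"
  define A where "A = inner xb xb"
  define B where "B = inner yb yb"
  define pp where "pp = inner xb yb"
  have AB: "2 * \<bar>pp\<bar> \<le> A + B" using two_inner_le[of xb yb] by (simp add: A_def B_def pp_def)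
  have hk: "1 / (2 * k) = \<alpha>\<^sup>2 / (2 * \<beta>\<^sup>2)" by (simp add: k_def)
  have f0: "\<bar>pp - c0\<bar> \<le> 1 / (2 * k)" using near hk by (simp add: pp_def c0_def)
  have i1: "inner (X (1/2)) (Y (1/2)) = 20/9 * pp - 8/9 * (A + B)"
    by (simp add: X_def Y_def inner_diff_left inner_diff_right inner_commute A_def B_def pp_def algebra_simps power2_eq_square)
  have i2: "inner (X (-1/2)) (Y (-1/2)) = 20/9 * pp + 8/9 * (A + B)"
    by (simp add: X_def Y_def inner_diff_left inner_diff_right inner_commute A_def B_def pp_def algebra_simps power2_eq_square)
  have AB1: "pp \<le> (A + B) / 2" "- pp \<le> (A + B) / 2" using AB abs_le_iff by fastforce+
  have f01: "pp - c0 \<le> 1 / (2 * k)" "-(pp - c0) \<le> 1 / (2 * k)" using f0 abs_le_iff by fastforce+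
  have fa1: "f (1/2) = inner (X (1/2)) (Y (1/2)) - 1 / (2 * k) - c0" by (simp add: f_def)
  have fb1: "f (-1/2) = inner (X (-1/2)) (Y (-1/2)) + 1 / (2 * k) - c0" by (simp add: f_def)
  have fa: "f (1/2) \<le> 0" unfolding fa1 i1 using AB1 f01 by linarith
  have fb: "0 \<le> f (-1/2)" unfolding fb1 i2 using AB1 f01 by linarith
  have ne: "1 - \<mu>\<^sup>2 \<noteq> 0" if "\<mu> \<in> {-1/2..1/2}" for \<mu> :: real
  proof -
    have "\<bar>\<mu>\<bar> \<le> \<bar>1/2\<bar>" using that by auto
    then have "\<mu>\<^sup>2 \<le> (1/2)\<^sup>2" using abs_le_square_iff by blast
    then show ?thesis by (simp add: power2_eq_square)
  qed
  have cont: "continuous_on {-1/2..1/2} f"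
    unfolding f_def X_def Y_def using ne k by (intro continuous_intros) auto
  obtain \<mu> where mu: "-1/2 \<le> \<mu>" "\<mu> \<le> 1/2" "f \<mu> = 0"
    using IVT2'[where f=f and a="-1/2" and b="1/2" and y=0, OF fa fb _ cont] by auto
  define d where "d = 1 - \<mu>\<^sup>2"
  have d: "d \<noteq> 0" using ne mu by (simp add: d_def)
  define Xm where "Xm = X \<mu>"
  define Ym where "Ym = Y \<mu>"
  have hx: "xb = Xm + \<mu> *\<^sub>R Ym"
  proof -
    have "(xb - \<mu> *\<^sub>R yb) + \<mu> *\<^sub>R (yb - \<mu> *\<^sub>R xb) = d *\<^sub>R xb"
      by (simp add: d_def algebra_simps power2_eq_square)
    moreover have "Xm + \<mu> *\<^sub>R Ym = (1/d) *\<^sub>R ((xb - \<mu> *\<^sub>R yb) + \<mu> *\<^sub>R (yb - \<mu> *\<^sub>R xb))"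
      unfolding Xm_def Ym_def X_def Y_def d_def scaleR_add_right by simp
    ultimately have "Xm + \<mu> *\<^sub>R Ym = (1/d) *\<^sub>R (d *\<^sub>R xb)" by simp
    then show ?thesis using d by simp
  qed
  have hy: "yb = Ym + \<mu> *\<^sub>R Xm"
  proof -
    have "(yb - \<mu> *\<^sub>R xb) + \<mu> *\<^sub>R (xb - \<mu> *\<^sub>R yb) = d *\<^sub>R yb"
      by (simp add: d_def algebra_simps power2_eq_square)
    moreover have "Ym + \<mu> *\<^sub>R Xm = (1/d) *\<^sub>R ((yb - \<mu> *\<^sub>R xb) + \<mu> *\<^sub>R (xb - \<mu> *\<^sub>R yb))"
      unfolding Xm_def Ym_def X_def Y_def d_def scaleR_add_right by simp
    ultimately have "Ym + \<mu> *\<^sub>R Xm = (1/d) *\<^sub>R (d *\<^sub>R yb)" by simp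
    then show ?thesis using d by simp
  qed
  have eXY: "inner Xm Ym = c0 + \<mu> / k" using mu(3) by (simp add: f_def Xm_def Ym_def)
  have mu_abs: "\<bar>\<mu>\<bar> \<le> 1/2" using mu by auto
  define w0 where "w0 = (Xm, Ym, inner Xm Ym / \<alpha>)"
  have w0C: "w0 \<in> C_set \<alpha>" using a by (simp add: w0_def)
  have key: "ip_beta \<beta> ((x', y', g') - (xb, yb, gb)) ((x', y', g') - (xb, yb, gb))
      \<ge> ip_beta \<beta> (w0 - (xb, yb, gb)) (w0 - (xb, yb, gb))
         + (inner (x' - Xm) (x' - Xm) + inner (y' - Ym) (y' - Ym)) / 2"
    if C': "inner x' y' = \<alpha> * g'" for x' y' g'
  proof -
    define dx where "dx = x' - Xm"
    define dy where "dy = y' - Ym"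
    define DX where "DX = inner dx dx"
    define DY where "DY = inner dy dy"
    define P where "P = inner dx dy"
    define L1 where "L1 = inner dx Ym"
    define L2 where "L2 = inner Xm dy"
    define XX where "XX = inner Xm Xm"
    define YY where "YY = inner Ym Ym"
    have x': "x' = Xm + dx" and y': "y' = Ym + dy" by (simp_all add: dx_def dy_def)
    have gk: "\<beta>\<^sup>2 * (g' - gb)\<^sup>2 = k * (inner x' y' - c0)\<^sup>2"
      using a C' by (simp add: k_def c0_def field_simps power2_eq_square)
    have I: "inner x' y' - c0 = \<mu> / k + (L1 + L2) + P"
      unfolding x' y' using eXY by (simp add: inner_add_left inner_add_right L1_def L2_def P_def inner_commute)
    have e1: "inner (x' - xb) (x' - xb) = DX - 2 * \<mu> * L1 + \<mu>\<^sup>2 * YY"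
      unfolding x' hx by (simp add: inner_diff_left inner_diff_right inner_add_left inner_add_right inner_commute DX_def L1_def YY_def algebra_simps power2_eq_square)
    have e2: "inner (y' - yb) (y' - yb) = DY - 2 * \<mu> * L2 + \<mu>\<^sup>2 * XX"
      unfolding y' hy by (simp add: inner_diff_left inner_diff_right inner_add_left inner_add_right inner_commute DY_def L2_def XX_def algebra_simps power2_eq_square)
    have lhs: "ip_beta \<beta> ((x', y', g') - (xb, yb, gb)) ((x', y', g') - (xb, yb, gb))
        = DX - 2 * \<mu> * L1 + \<mu>\<^sup>2 * YY + (DY - 2 * \<mu> * L2 + \<mu>\<^sup>2 * XX) + k * (\<mu> / k + (L1 + L2) + P)\<^sup>2"
      using e1 e2 gk I by (simp add: ip_sq)
    have gk0: "\<beta>\<^sup>2 * (inner Xm Ym / \<alpha> - gb)\<^sup>2 = k * (\<mu> / k)\<^sup>2"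
      using a eXY by (simp add: k_def c0_def field_simps power2_eq_square)
    have r1: "inner (Xm - xb) (Xm - xb) = \<mu>\<^sup>2 * YY" unfolding hx by (simp add: YY_def power2_eq_square)
    have r2: "inner (Ym - yb) (Ym - yb) = \<mu>\<^sup>2 * XX" unfolding hy by (simp add: XX_def power2_eq_square)
    have rhs: "ip_beta \<beta> (w0 - (xb, yb, gb)) (w0 - (xb, yb, gb)) = \<mu>\<^sup>2 * YY + \<mu>\<^sup>2 * XX + k * (\<mu> / k)\<^sup>2"
      using r1 r2 gk0 by (simp add: w0_def ip_sq)
    have sq: "k * (\<mu> / k + (L1 + L2) + P)\<^sup>2 = k * (\<mu> / k)\<^sup>2 + 2 * \<mu> * (L1 + L2) + 2 * \<mu> * P + k * (L1 + L2 + P)\<^sup>2"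
      using k by (simp add: power2_eq_square field_simps)
    have kp: "k * (L1 + L2 + P)\<^sup>2 \<ge> 0" using k by simp
    have "\<bar>2 * \<mu> * P\<bar> \<le> (DX + DY) / 2"
    proof -
      have "\<bar>2 * \<mu> * P\<bar> = \<bar>\<mu>\<bar> * (2 * \<bar>P\<bar>)" by (simp add: abs_mult)
      also have "\<dots> \<le> (1/2) * (DX + DY)"
        using mu_abs two_inner_le[of dx dy] by (intro mult_mono) (auto simp: P_def DX_def DY_def)
      finally show ?thesis by simp
    qed
    then have m1: "- (2 * \<mu> * P) \<le> (DX + DY) / 2" by linarith
    have m2: "2 * \<mu> * (L1 + L2) = 2 * \<mu> * L1 + 2 * \<mu> * L2" by (simp add: algebra_simps)
    have m3: "DX \<ge> 0" "DY \<ge> 0" by (simp_all add: DX_def DY_def)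
    from m1 m3 show ?thesis unfolding lhs rhs sq DX_def[symmetric] DY_def[symmetric] dx_def[symmetric] dy_def[symmetric]
      using kp by (simp add: algebra_simps)
  qed
  have z: "\<And>x' y' g'. (x', y', g') - (xb, yb, gb) = (x' - xb, y' - yb, g' - gb)" by simp
  have nn: "\<And>w. ip_beta \<beta> w w \<ge> 0"
    by (metis ip_sq prod_cases3 add_nonneg_nonneg inner_ge_zero zero_le_power2 mult_nonneg_nonneg)
  have w0P: "w0 \<in> proj (ip_beta \<beta>) (C_set \<alpha>) (xb, yb, gb)"
    unfolding proj_def
  proof (intro CollectI conjI ballI w0C)
    fix w' :: "'a \<times> 'a \<times> real" assume "w' \<in> C_set \<alpha>"
    then obtain x' y' g' where w': "w' = (x', y', g')" "inner x' y' = \<alpha> * g'" by (cases w') auto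
    have h: "0 \<le> (inner (x' - Xm) (x' - Xm) + inner (y' - Ym) (y' - Ym)) / 2" by simp
    have "ip_beta \<beta> (w0 - (xb, yb, gb)) (w0 - (xb, yb, gb)) \<le> ip_beta \<beta> (w0 - (xb, yb, gb)) (w0 - (xb, yb, gb))
        + (inner (x' - Xm) (x' - Xm) + inner (y' - Ym) (y' - Ym)) / 2" using h by simp
    also have "\<dots> \<le> ip_beta \<beta> ((x', y', g') - (xb, yb, gb)) ((x', y', g') - (xb, yb, gb))"
      by (rule key[OF w'(2)])
    finally have "ip_beta \<beta> (w0 - (xb, yb, gb)) (w0 - (xb, yb, gb)) \<le> ip_beta \<beta> (w' - (xb, yb, gb)) (w' - (xb, yb, gb))"
      using w'(1) by simp
    then show "ipnorm (ip_beta \<beta>) (w0 - (xb, yb, gb)) \<le> ipnorm (ip_beta \<beta>) (w' - (xb, yb, gb))"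
      by (simp add: ipnorm_def)
  qed
  moreover have "w = w0" if wP: "w \<in> proj (ip_beta \<beta>) (C_set \<alpha>) (xb, yb, gb)" for w :: "'a \<times> 'a \<times> real"
  proof -
    have wC: "w \<in> C_set \<alpha>" and le: "ipnorm (ip_beta \<beta>) (w - (xb, yb, gb)) \<le> ipnorm (ip_beta \<beta>) (w0 - (xb, yb, gb))"
      using wP w0C by (auto simp: proj_def)
    obtain x' y' g' where w': "w = (x', y', g')" by (cases w)
    have C': "inner x' y' = \<alpha> * g'" using wC w' by simp
    have "ip_beta \<beta> (w - (xb, yb, gb)) (w - (xb, yb, gb)) \<le> ip_beta \<beta> (w0 - (xb, yb, gb)) (w0 - (xb, yb, gb))"
      using le by (simp add: ipnorm_def)
    then have le2: "ip_beta \<beta> ((x', y', g') - (xb, yb, gb)) ((x', y', g') - (xb, yb, gb)) \<le> ip_beta \<beta> (w0 - (xb, yb, gb)) (w0 - (xb, yb, gb))"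
      by (simp only: w')
    have "ip_beta \<beta> (w0 - (xb, yb, gb)) (w0 - (xb, yb, gb))
         + (inner (x' - Xm) (x' - Xm) + inner (y' - Ym) (y' - Ym)) / 2 \<le> ip_beta \<beta> (w0 - (xb, yb, gb)) (w0 - (xb, yb, gb))"
      by (rule order_trans[OF key[OF C'] le2])
    then have "inner (x' - Xm) (x' - Xm) + inner (y' - Ym) (y' - Ym) \<le> 0"
      by simp
    then have "inner (x' - Xm) (x' - Xm) = 0" "inner (y' - Ym) (y' - Ym) = 0"
      by (smt (verit) inner_ge_zero)+
    then have "x' = Xm" "y' = Ym" by simp_all
    moreover have "g' = inner Xm Ym / \<alpha>" using C' a \<open>x' = Xm\<close> \<open>y' = Ym\<close> by simp
    ultimately show ?thesis by (simp add: w' w0_def)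
  qed
  ultimately show ?thesis by blast
qed


lemma near_lemma:
  fixes x0 y0 :: "'a::real_inner"
  assumes a: "\<alpha> \<noteq> 0" and b: "\<beta> > 0" and C0: "inner x0 y0 = \<alpha> * g0"
  shows "\<exists>\<delta>>0. \<forall>xb yb gb. ipnorm (ip_beta \<beta>) ((xb, yb, gb) - (x0, y0, g0)) < \<delta>
            \<longrightarrow> \<bar>inner xb yb - \<alpha> * gb\<bar> \<le> \<alpha>\<^sup>2 / (2 * \<beta>\<^sup>2)"
proof -
  define R where "R = \<alpha>\<^sup>2 / (2 * \<beta>\<^sup>2)"
  define M where "M = norm x0 + norm y0 + 1 + \<bar>\<alpha>\<bar> / \<beta>"
  have R: "R > 0" using a b by (simp add: R_def)
  have M: "M \<ge> 1" using b by (simp add: M_def)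
  define \<delta> where "\<delta> = min 1 (R / M)"
  have d0: "\<delta> > 0" using R M by (simp add: \<delta>_def)
  have d1: "\<delta> \<le> 1" by (simp add: \<delta>_def)
  have dM: "\<delta> * M \<le> R" using M R by (simp add: \<delta>_def min_def field_simps)
  show ?thesis
  proof (intro exI[of _ \<delta>] conjI allI impI d0)
    fix xb yb gb
    assume h: "ipnorm (ip_beta \<beta>) ((xb, yb, gb) - (x0, y0, g0)) < \<delta>"
    define dx where "dx = xb - x0"
    define dy where "dy = yb - y0"
    define dg where "dg = gb - g0"
    define S where "S = inner dx dx + inner dy dy + \<beta>\<^sup>2 * dg\<^sup>2"
    have e: "ipnorm (ip_beta \<beta>) ((xb, yb, gb) - (x0, y0, g0)) = sqrt S"
      by (simp add: ipnorm_def ip_sq S_def dx_def dy_def dg_def)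
    have nx: "norm dx < \<delta>"
    proof -
      have "norm dx = sqrt (inner dx dx)" by (simp add: norm_eq_sqrt_inner)
      also have "\<dots> \<le> sqrt S" by (simp add: S_def)
      finally show ?thesis using h e by simp
    qed
    have ny: "norm dy < \<delta>"
    proof -
      have "norm dy = sqrt (inner dy dy)" by (simp add: norm_eq_sqrt_inner)
      also have "\<dots> \<le> sqrt S" by (simp add: S_def)
      finally show ?thesis using h e by simp
    qed
    have ng: "\<beta> * \<bar>dg\<bar> < \<delta>"
    proof -
      have "\<beta> * \<bar>dg\<bar> = sqrt (\<beta>\<^sup>2 * dg\<^sup>2)" using b by (simp add: real_sqrt_mult)
      also have "\<dots> \<le> sqrt S" by (simp add: S_def)
      finally show ?thesis using h e by simp
    qed
    have ident: "inner xb yb - \<alpha> * gb = inner dx y0 + inner x0 dy + inner dx dy - \<alpha> * dg"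
    proof -
      have "xb = x0 + dx" "yb = y0 + dy" "gb = g0 + dg" by (simp_all add: dx_def dy_def dg_def)
      then show ?thesis using C0 by (simp add: inner_add_left inner_add_right algebra_simps)
    qed
    have t1: "\<bar>inner dx y0\<bar> \<le> \<delta> * norm y0"
      using Cauchy_Schwarz_ineq2[of dx y0] nx by (smt (verit) mult_right_mono norm_ge_zero)
    have t2: "\<bar>inner x0 dy\<bar> \<le> norm x0 * \<delta>"
      using Cauchy_Schwarz_ineq2[of x0 dy] ny by (smt (verit) mult_left_mono norm_ge_zero)
    have t3: "\<bar>inner dx dy\<bar> \<le> \<delta>"
    proof -
      have "norm dx * norm dy \<le> \<delta> * \<delta>" using nx ny d0 by (intro mult_mono) auto
      also have "\<dots> \<le> \<delta>" using d0 d1 by (simp add: mult_le_cancel_left1)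
      finally show ?thesis using Cauchy_Schwarz_ineq2[of dx dy] by linarith
    qed
    have t4: "\<bar>\<alpha> * dg\<bar> \<le> \<bar>\<alpha>\<bar> / \<beta> * \<delta>"
    proof -
      have "\<bar>dg\<bar> \<le> \<delta> / \<beta>" using ng b by (simp add: field_simps)
      then have "\<bar>\<alpha>\<bar> * \<bar>dg\<bar> \<le> \<bar>\<alpha>\<bar> * (\<delta> / \<beta>)" by (rule mult_left_mono) simp
      then show ?thesis by (simp add: abs_mult)
    qed
    have "\<bar>inner xb yb - \<alpha> * gb\<bar> \<le> \<delta> * norm y0 + norm x0 * \<delta> + \<delta> + \<bar>\<alpha>\<bar> / \<beta> * \<delta>"
      unfolding ident using t1 t2 t3 t4 by linarith
    also have "\<dots> = \<delta> * M" by (simp add: M_def algebra_simps)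
    finally show "\<bar>inner xb yb - \<alpha> * gb\<bar> \<le> \<alpha>\<^sup>2 / (2 * \<beta>\<^sup>2)" using dM by (simp add: R_def)
  qed
qed

theorem mainTheorem4:
  fixes \<alpha> \<beta> :: real
  assumes "\<alpha> \<noteq> 0" and "\<beta> > 0"
  shows "closed (C_set \<alpha> :: ('a::{real_inner, complete_space} \<times> 'a \<times> real) set)
    \<and> ((\<nexists>B :: 'a set. finite B \<and> span B = UNIV) \<longrightarrow>
         \<not> closedin weak_top (C_set \<alpha> :: ('a \<times> 'a \<times> real) set)
         \<and> weak_top closure_of (C_set \<alpha> :: ('a \<times> 'a \<times> real) set) = UNIV)
    \<and> prox_regular (ip_beta \<beta>) (C_set \<alpha> :: ('a \<times> 'a \<times> real) set)
    \<and> (\<forall>a \<in> (C_set \<alpha> :: ('a \<times> 'a \<times> real) set). \<exists>\<delta>>0. \<forall>z.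
         ipnorm (ip_beta \<beta>) (z - a) < \<delta> \<longrightarrow> (\<exists>!w. w \<in> proj (ip_beta \<beta>) (C_set \<alpha>) z))"
proof -
  have P1: "closed (C_set \<alpha> :: ('a \<times> 'a \<times> real) set)" by (rule C_closed)
  have P2: "(\<nexists>B :: 'a set. finite B \<and> span B = UNIV) \<longrightarrow>
         \<not> closedin weak_top (C_set \<alpha> :: ('a \<times> 'a \<times> real) set)
         \<and> weak_top closure_of (C_set \<alpha> :: ('a \<times> 'a \<times> real) set) = UNIV"
    using not_weak_closed[OF assms(1)] weak_closure_univ[OF assms(1)] by blast
  have P3: "prox_regular (ip_beta \<beta>) (C_set \<alpha> :: ('a \<times> 'a \<times> real) set)"
    by (rule prox_reg[OF assms])
  have P4: "\<forall>a \<in> (C_set \<alpha> :: ('a \<times> 'a \<times> real) set). \<exists>\<delta>>0. \<forall>z.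
         ipnorm (ip_beta \<beta>) (z - a) < \<delta> \<longrightarrow> (\<exists>!w. w \<in> proj (ip_beta \<beta>) (C_set \<alpha>) z)"
  proof
    fix aa :: "'a \<times> 'a \<times> real" assume aC: "aa \<in> C_set \<alpha>"
    obtain x0 y0 g0 where aa: "aa = (x0, y0, g0)" by (cases aa)
    have C0: "inner x0 y0 = \<alpha> * g0" using aC aa by simp
    obtain \<delta> where d: "\<delta> > 0" and dd: "\<forall>xb yb gb. ipnorm (ip_beta \<beta>) ((xb, yb, gb) - (x0, y0, g0)) < \<delta>
            \<longrightarrow> \<bar>inner xb yb - \<alpha> * gb\<bar> \<le> \<alpha>\<^sup>2 / (2 * \<beta>\<^sup>2)"
      using near_lemma[OF assms C0] by blast
    show "\<exists>\<delta>>0. \<forall>z. ipnorm (ip_beta \<beta>) (z - aa) < \<delta> \<longrightarrow> (\<exists>!w. w \<in> proj (ip_beta \<beta>) (C_set \<alpha>) z)"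
    proof (intro exI[of _ \<delta>] conjI allI impI d)
      fix z :: "'a \<times> 'a \<times> real"
      assume hz: "ipnorm (ip_beta \<beta>) (z - aa) < \<delta>"
      obtain xb yb gb where z: "z = (xb, yb, gb)" by (cases z)
      have "ipnorm (ip_beta \<beta>) ((xb, yb, gb) - (x0, y0, g0)) < \<delta>" using hz by (simp only: z aa)
      then have "\<bar>inner xb yb - \<alpha> * gb\<bar> \<le> \<alpha>\<^sup>2 / (2 * \<beta>\<^sup>2)" using dd by blast
      from proj_unique[OF assms this] show "\<exists>!w. w \<in> proj (ip_beta \<beta>) (C_set \<alpha>) z" by (simp add: z)
    qed
  qed
  show ?thesis by (intro conjI P1 P2 P3 P4)
qed

end
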